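(* Let $a,b,d\in\mathbb C$ with $a\notin\mathbb Z$ and $d\notin\{0,-1,-2,\dots\}$. Then, as an identity of formal power series in $x,y$, $$F(a,b;d;x)\,{}_0F_1(1-a;y)=\mathrm H_3(a,b;d;x,-y)+\sum_{k=1}^\infty\sum_{l=1}^k\frac{(-1)^{k-l}(k-1)!}{(l-1)!\,l!\,(k-l)!}\,\frac{(b)_l}{(1-a)_k(1-a)_{k-l}(d)_l}\,x^ly^k\,\mathrm H_3(a-k+l,b+l;d+l;x,-y).$$
   Context: Pochhammer symbol: $(\lambda)_k=\Gamma(\lambda+k)/\Gamma(\lambda)$ for every integer $k$ (possibly negative) whenever defined; $(\lambda)_0=1$. $F(a,b;c;x)=\sum_{k\ge0}\frac{(a)_k(b)_k}{(c)_k k!}x^k$, ${}_0F_1(c;x)=\sum_{k\ge0}\frac{x^k}{(c)_k k!}$. Confluent Horn function $\mathrm H_3(a,b;d;x,y)=\sum_{p,q\ge0}\frac{(a)_{p-q}(b)_p}{(d)_p\,p!\,q!}x^py^q$. All functions are regarded as formal power series in $x,y$; the infinite double sum converges in the formal (degree) topology. *)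

theory Defs
  imports Complex_Main
begin

text \<open>Formal power series in two variables x, y over the complex numbers are represented by
their coefficient functions: \<open>f p q\<close> is the coefficient of \<open>x^p y^q\<close>.\<close>

type_synonym bfps = "nat \<Rightarrow> nat \<Rightarrow> complex"

text \<open>Pochhammer symbol with integer index: (lambda)_k = Gamma(lambda+k)/Gamma(lambda).
For k >= 0 this is the usual rising factorial; for k = -m < 0 it is
Gamma(lambda-m)/Gamma(lambda) = 1/(lambda-m)_m.\<close>
definition poch_int :: "complex \<Rightarrow> int \<Rightarrow> complex" where
  "poch_int lam k = (if k \<ge> 0 then pochhammer lam (nat k)
                     else 1 / pochhammer (lam + of_int k) (nat (- k)))"

definition bmult :: "bfps \<Rightarrow> bfps \<Rightarrow> bfps" where
  "bmult f g = (\<lambda>p q. \<Sum>i\<le>p. \<Sum>j\<le>q. f i j * g (p - i) (q - j))"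

definition badd :: "bfps \<Rightarrow> bfps \<Rightarrow> bfps" where
  "badd f g = (\<lambda>p q. f p q + g p q)"

definition bshift :: "nat \<Rightarrow> nat \<Rightarrow> bfps \<Rightarrow> bfps" where
  "bshift l k f = (\<lambda>p q. if l \<le> p \<and> k \<le> q then f (p - l) (q - k) else 0)"

text \<open>Convergence of a series of formal power series in the formal (degree) topology:
every coefficient of the partial sums is eventually constant, equal to that of the sum.\<close>
definition formal_sums :: "(nat \<Rightarrow> bfps) \<Rightarrow> bfps \<Rightarrow> bool" where
  "formal_sums T S \<longleftrightarrow>
     (\<forall>p q. \<exists>N. \<forall>n\<ge>N. (\<Sum>k<n. T k p q) = S p q)"

definition gaussF :: "complex \<Rightarrow> complex \<Rightarrow> complex \<Rightarrow> bfps" where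
  "gaussF a b c = (\<lambda>p q. if q = 0 then pochhammer a p * pochhammer b p / (pochhammer c p * fact p)
                         else 0)"

definition hyp0F1_y :: "complex \<Rightarrow> bfps" where
  "hyp0F1_y c = (\<lambda>p q. if p = 0 then 1 / (pochhammer c q * fact q) else 0)"

definition H3_neg :: "complex \<Rightarrow> complex \<Rightarrow> complex \<Rightarrow> bfps" where
  "H3_neg a b d = (\<lambda>p q. poch_int a (int p - int q) * pochhammer b p
                          / (pochhammer d p * fact p * fact q) * (-1) ^ q)"

definition corr_term :: "complex \<Rightarrow> complex \<Rightarrow> complex \<Rightarrow> nat \<Rightarrow> bfps" where
  "corr_term a b d k = (\<lambda>p q. \<Sum>l\<in>{1..k}.
      ((-1) ^ (k - l) * fact (k - 1) / (fact (l - 1) * fact l * fact (k - l))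
       * pochhammer b l / (pochhammer (1 - a) k * pochhammer (1 - a) (k - l) * pochhammer d l))
      * bshift l k (H3_neg (a - of_nat k + of_nat l) (b + of_nat l) (d + of_nat l)) p q)"

end

theory Submission
  imports Defs "HOL-Analysis.Analysis" "HOL-Computational_Algebra.Formal_Power_Series"
begin

definition Gm :: "complex \<Rightarrow> int \<Rightarrow> complex" where "Gm a n = Gamma (a + of_int n)"

lemma notZ: assumes "a \<notin> \<int>" shows "a + of_int n \<notin> \<int>\<^sub>\<le>\<^sub>0"
proof
  assume "a + of_int n \<in> \<int>\<^sub>\<le>\<^sub>0"
  then have "a + of_int n \<in> \<int>" using nonpos_Ints_subset_Ints by blast
  then have "a + of_int n - of_int n \<in> \<int>" by (intro Ints_diff) auto
  then show False using assms by simp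
qed

lemma Gm_nz: "a \<notin> \<int> \<Longrightarrow> Gm a n \<noteq> 0"
  unfolding Gm_def using notZ Gamma_eq_zero_iff by blast

lemma poch_nat_Gm: assumes "a \<notin> \<int>"
  shows "pochhammer (a + of_int j) n = Gm a (j + int n) / Gm a j"
  using pochhammer_Gamma[OF notZ[OF assms, of j], of n] unfolding Gm_def by (simp add: add.assoc)

lemma poch_int_Gm: assumes "a \<notin> \<int>"
  shows "poch_int (a + of_int j) n = Gm a (j + n) / Gm a j"
proof (cases "n \<ge> 0")
  case True
  then show ?thesis unfolding poch_int_def using poch_nat_Gm[OF assms, of j "nat n"] by simp
next
  case False
  have e: "a + of_int j + of_int n = a + of_int (j + n)" by simp
  have "poch_int (a + of_int j) n = 1 / pochhammer (a + of_int (j + n)) (nat (- n))"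
    unfolding poch_int_def using False e by (simp add: add.assoc)
  also have "\<dots> = 1 / (Gm a (j + n + int (nat (-n))) / Gm a (j + n))"
    by (subst poch_nat_Gm[OF assms]) (rule refl)
  also have "\<dots> = Gm a (j + n) / Gm a j" using False by simp
  finally show ?thesis .
qed

lemma poch1ma: assumes "a \<notin> \<int>"
  shows "pochhammer (1 - a) k = (-1) ^ k * Gm a 0 / Gm a (- int k)"
proof -
  have "pochhammer (1 - a) k = pochhammer (- (a - 1)) k" by simp
  also have "\<dots> = (-1) ^ k * pochhammer (a + of_int (- int k)) k"
    by (subst pochhammer_minus) (simp add: algebra_simps)
  also have "\<dots> = (-1) ^ k * Gm a 0 / Gm a (- int k)"
    using poch_nat_Gm[OF assms, of "- int k" k] by simp
  finally show ?thesis .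
qed

lemma poch_vdm:
  fixes x y :: complex
  shows "(\<Sum>k=0..n. pochhammer x k / fact k * (pochhammer y (n - k) / fact (n - k))) = pochhammer (x + y) n / fact n"
proof -
  have "(\<Sum>k=0..n. pochhammer x k / fact k * (pochhammer y (n - k) / fact (n - k)))
      = (\<Sum>k=0..n. (-1)^n * (((- x) gchoose k) * ((- y) gchoose (n - k))))"
  proof (rule sum.cong)
    fix k assume "k \<in> {0..n}"
    then have "(-1::complex)^k * (-1)^(n-k) = (-1)^n" by (simp flip: power_add)
    then show "pochhammer x k / fact k * (pochhammer y (n - k) / fact (n - k)) = (-1)^n * (((- x) gchoose k) * ((- y) gchoose (n - k)))"
      by (simp add: gbinomial_pochhammer)
  qed simp
  also have "\<dots> = (-1)^n * ((- (x + y)) gchoose n)"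
    by (simp add: sum_distrib_left[symmetric] gbinomial_Vandermonde)
  also have "\<dots> = pochhammer (x + y) n / fact n" by (simp add: gbinomial_pochhammer add.commute)
  finally show ?thesis .
qed

lemma term_eq:
  fixes a b d :: complex
  assumes anz: "a \<notin> \<int>" and dnz: "\<forall>n::nat. d \<noteq> - of_nat n"
    and l1: "1 \<le> l" and lk: "l \<le> k" and kq: "k \<le> q"
  shows "((-1) ^ (k - l) * fact (k - 1) / (fact (l - 1) * fact l * fact (k - l))
       * pochhammer b l / (pochhammer (1 - a) k * pochhammer (1 - a) (k - l) * pochhammer d l))
      * bshift l k (H3_neg (a - of_nat k + of_nat l) (b + of_nat l) (d + of_nat l)) p q
   = (-1) ^ q * pochhammer b p / (pochhammer d p * fact p * Gm a 0 ^ 2)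
     * (Gm a (int p - int q) * Gm a (- int k) / fact (q - k))
     * (of_nat ((k - 1) choose (l - 1)) * of_nat (p choose l))"
proof (cases "l \<le> p")
  case False
  then show ?thesis by (simp add: bshift_def)
next
  case True
  have e1: "poch_int (a - of_nat k + of_nat l) (int (p - l) - int (q - k)) = Gm a (int p - int q) / Gm a (int l - int k)"
  proof -
    have "a - of_nat k + of_nat l = a + of_int (int l - int k)" by simp
    then have "poch_int (a - of_nat k + of_nat l) (int (p - l) - int (q - k))
       = Gm a (int l - int k + (int (p - l) - int (q - k))) / Gm a (int l - int k)"
      using poch_int_Gm[OF anz] by metis
    also have "int l - int k + (int (p - l) - int (q - k)) = int p - int q" using True kq by simp
    finally show ?thesis .
  qed
  have e2: "pochhammer b p = pochhammer b l * pochhammer (b + of_nat l) (p - l)"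
    by (rule pochhammer_product[OF True])
  have e3: "pochhammer d p = pochhammer d l * pochhammer (d + of_nat l) (p - l)"
    by (rule pochhammer_product[OF True])
  have e4: "pochhammer (1 - a) k = (-1) ^ k * Gm a 0 / Gm a (- int k)" by (rule poch1ma[OF anz])
  have e5: "pochhammer (1 - a) (k - l) = (-1) ^ (k - l) * Gm a 0 / Gm a (int l - int k)"
    using poch1ma[OF anz, of "k - l"] lk by simp
  have e6: "(of_nat ((k - 1) choose (l - 1)) :: complex) = fact (k - 1) / (fact (l - 1) * fact (k - l))"
    using binomial_fact[where 'a=complex, of "l - 1" "k - 1"] l1 lk by simp
  have e7: "(of_nat (p choose l) :: complex) = fact p / (fact l * fact (p - l))"
    using binomial_fact[OF True] by simp
  have s: "(-1::complex) ^ (q - k) = (-1) ^ q * (-1) ^ k"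
  proof -
    have "(-1::complex) ^ q = (-1) ^ (q - k) * (-1) ^ k"
      using kq by (simp flip: power_add)
    then have "(-1::complex) ^ q * (-1) ^ k = (-1) ^ (q - k) * ((-1) ^ k * (-1) ^ k)"
      by (simp add: mult.assoc)
    also have "(-1::complex) ^ k * (-1) ^ k = 1" by (simp flip: power_add)
    finally show ?thesis by simp
  qed
  have dl: "pochhammer d l \<noteq> 0" using dnz by (auto simp: pochhammer_eq_0_iff)
  have dl2: "pochhammer (d + of_nat l) (p - l) \<noteq> 0"
    using dnz by (auto simp: pochhammer_eq_0_iff eq_neg_iff_add_eq_0) (metis add.commute add.assoc of_nat_add add_eq_0_iff)
  have g: "\<And>n. Gm a n \<noteq> 0" using Gm_nz[OF anz] by blast
  show ?thesis
    unfolding bshift_def H3_neg_def using True kq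
    apply (simp only: e1 e2 e3 e4 e5 e6 e7 s if_True simp_thms)
    using dl dl2 g by (simp add: field_simps power2_eq_square)
qed

lemma binsum:
  assumes "1 \<le> k"
  shows "(\<Sum>l\<in>{1..k}. ((k - 1) choose (l - 1)) * (p choose l)) = (p + (k - 1)) choose k"
proof -
  have "(p + (k - 1)) choose k = (\<Sum>i\<le>k. (p choose i) * ((k - 1) choose (k - i)))"
    using vandermonde[where r=k and m=p and n="k - 1"] by simp
  also have "{..k} = insert 0 {1..k}" by auto
  also have "(\<Sum>i\<in>insert 0 {1..k}. (p choose i) * ((k - 1) choose (k - i)))
      = (\<Sum>i\<in>{1..k}. (p choose i) * ((k - 1) choose (k - i)))"
    using assms by (subst sum.insert) auto
  also have "\<dots> = (\<Sum>l\<in>{1..k}. ((k - 1) choose (l - 1)) * (p choose l))"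
  proof (rule sum.cong)
    fix i assume i: "i \<in> {1..k}"
    then have "(k - 1) choose (i - 1) = (k - 1) choose (k - 1 - (i - 1))"
      by (intro binomial_symmetric) auto
    also have "k - 1 - (i - 1) = k - i" using i by auto
    finally show "(p choose i) * ((k - 1) choose (k - i)) = ((k - 1) choose (i - 1)) * (p choose i)"
      by simp
  qed simp
  finally show ?thesis by simp
qed

lemma binpoch:
  assumes "1 \<le> k"
  shows "(of_nat ((p + (k - 1)) choose k) :: complex) = pochhammer (of_nat p) k / fact k"
proof -
  have "(of_nat ((p + (k - 1)) choose k) :: complex) = of_nat (p + (k - 1)) gchoose k"
    by (simp add: binomial_gbinomial)
  also have "\<dots> = pochhammer (of_nat (p + (k - 1)) - of_nat k + 1) k / fact k"
    by (rule gbinomial_pochhammer')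
  also have "of_nat (p + (k - 1)) - of_nat k + 1 = (of_nat p :: complex)"
    using assms by (simp add: of_nat_diff)
  finally show ?thesis .
qed

lemma corr_eq:
  fixes a b d :: complex
  assumes anz: "a \<notin> \<int>" and dnz: "\<forall>n::nat. d \<noteq> - of_nat n"
    and k1: "1 \<le> k" and kq: "k \<le> q"
  shows "corr_term a b d k p q
   = (-1) ^ q * pochhammer b p / (pochhammer d p * fact p * Gm a 0 ^ 2)
     * (Gm a (int p - int q) * Gm a (- int k) / fact (q - k))
     * (pochhammer (of_nat p) k / fact k)"
proof -
  let ?K = "(-1) ^ q * pochhammer b p / (pochhammer d p * fact p * Gm a 0 ^ 2)
     * (Gm a (int p - int q) * Gm a (- int k) / fact (q - k))"
  have "corr_term a b d k p q = (\<Sum>l\<in>{1..k}. ?K * (of_nat ((k - 1) choose (l - 1)) * of_nat (p choose l)))"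
    unfolding corr_term_def
    by (rule sum.cong[OF refl], rule term_eq[OF anz dnz _ _ kq]) auto
  also have "\<dots> = ?K * of_nat (\<Sum>l\<in>{1..k}. ((k - 1) choose (l - 1)) * (p choose l))"
    by (simp add: sum_distrib_left)
  also have "\<dots> = ?K * (pochhammer (of_nat p) k / fact k)"
    by (simp only: binsum[OF k1] binpoch[OF k1])
  finally show ?thesis .
qed

lemma core:
  assumes anz: "a \<notin> \<int>"
  shows "Gm a (int p) * Gm a (- int q) / fact q
    = Gm a (int p - int q) * (Gm a 0 / fact q + (\<Sum>k\<in>{1..q}. Gm a (- int k) * pochhammer (of_nat p) k / (fact k * fact (q - k))))"
proof -
  have g: "\<And>n. Gm a n \<noteq> 0" using Gm_nz[OF anz] by blast
  have v0: "(\<Sum>k=0..q. pochhammer (of_nat p) k / fact k * (pochhammer (a + of_int (- int q)) (q - k) / fact (q - k)))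
     = pochhammer (of_nat p + (a + of_int (- int q))) q / fact q"
    by (rule poch_vdm)
  have p1: "pochhammer (a + of_int (- int q)) (q - k) = Gm a (- int k) / Gm a (- int q)" if "k \<in> {0..q}" for k
    using poch_nat_Gm[OF anz, of "- int q" "q - k"] that by simp
  have p2: "pochhammer (of_nat p + (a + of_int (- int q))) q = Gm a (int p) / Gm a (int p - int q)"
  proof -
    have e: "of_nat p + (a + of_int (- int q)) = a + of_int (int p - int q)" by simp
    show ?thesis unfolding e using poch_nat_Gm[OF anz, of "int p - int q" q] by simp
  qed
  have v: "(\<Sum>k=0..q. Gm a (- int k) * pochhammer (of_nat p) k / (fact k * fact (q - k)))
     = Gm a (- int q) * (Gm a (int p) / Gm a (int p - int q) / fact q)"
  proof -
    have "(\<Sum>k=0..q. Gm a (- int k) * pochhammer (of_nat p) k / (fact k * fact (q - k)))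
       = (\<Sum>k=0..q. Gm a (- int q) * (pochhammer (of_nat p) k / fact k * (pochhammer (a + of_int (- int q)) (q - k) / fact (q - k))))"
    proof (rule sum.cong[OF refl])
      fix k assume k: "k \<in> {0..q}"
      show "Gm a (- int k) * pochhammer (of_nat p) k / (fact k * fact (q - k))
         = Gm a (- int q) * (pochhammer (of_nat p) k / fact k * (pochhammer (a + of_int (- int q)) (q - k) / fact (q - k)))"
        unfolding p1[OF k] using g by (simp add: field_simps)
    qed
    also have "\<dots> = Gm a (- int q) * (Gm a (int p) / Gm a (int p - int q) / fact q)"
      by (simp only: sum_distrib_left[symmetric] v0 p2)
    finally show ?thesis .
  qed
  have sp: "(\<Sum>k=0..q. Gm a (- int k) * pochhammer (of_nat p) k / (fact k * fact (q - k)))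
     = Gm a 0 / fact q + (\<Sum>k\<in>{1..q}. Gm a (- int k) * pochhammer (of_nat p) k / (fact k * fact (q - k)))"
  proof -
    have "{0..q} = insert 0 {1..q}" by auto
    then show ?thesis by (simp add: sum.insert)
  qed
  show ?thesis unfolding sp[symmetric] v using g by (simp add: field_simps)
qed

lemma lhs_coef: "bmult (gaussF a b d) (hyp0F1_y c) p q = gaussF a b d p 0 * hyp0F1_y c 0 q"
proof -
  have "bmult (gaussF a b d) (hyp0F1_y c) p q = (\<Sum>i\<le>p. if i = p then gaussF a b d p 0 * hyp0F1_y c 0 q else 0)"
    unfolding bmult_def
  proof (rule sum.cong[OF refl])
    fix i assume i: "i \<in> {..p}"
    have "(\<Sum>j\<le>q. gaussF a b d i j * hyp0F1_y c (p - i) (q - j))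
        = (\<Sum>j\<le>q. if j = 0 then gaussF a b d i 0 * hyp0F1_y c (p - i) q else 0)"
      by (rule sum.cong[OF refl]) (simp add: gaussF_def)
    also have "\<dots> = gaussF a b d i 0 * hyp0F1_y c (p - i) q" by (simp add: sum.delta)
    also have "\<dots> = (if i = p then gaussF a b d p 0 * hyp0F1_y c 0 q else 0)"
      using i by (auto simp: hyp0F1_y_def)
    finally show "(\<Sum>j\<le>q. gaussF a b d i j * hyp0F1_y c (p - i) (q - j)) = (if i = p then gaussF a b d p 0 * hyp0F1_y c 0 q else 0)" .
  qed
  also have "\<dots> = gaussF a b d p 0 * hyp0F1_y c 0 q" by (simp add: sum.delta)
  finally show ?thesis .
qed

lemma corr_zero: "q < k \<Longrightarrow> corr_term a b d k p q = 0"
  by (simp add: corr_term_def bshift_def)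

theorem mainTheorem7:
  fixes a b d :: complex
  assumes "a \<notin> \<int>"
    and "\<forall>n::nat. d \<noteq> - of_nat n"
  shows "\<exists>S. formal_sums (\<lambda>k. if k = 0 then (\<lambda>p q. 0) else corr_term a b d k) S
             \<and> bmult (gaussF a b d) (hyp0F1_y (1 - a)) = badd (H3_neg a b d) S"
proof -
  note anz = assms(1) and dnz = assms(2)
  define T where "T = (\<lambda>k. if k = 0 then (\<lambda>p q. 0) else corr_term a b d k)"
  define S where "S = (\<lambda>p q. \<Sum>k<Suc q. T k p q)"
  have fs: "formal_sums T S"
    unfolding formal_sums_def
  proof (intro allI exI[of _ "Suc q" for q] impI)
    fix p q n :: nat assume n: "Suc q \<le> n"
    show "(\<Sum>k<n. T k p q) = S p q"
      unfolding S_def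
      by (rule sum.mono_neutral_right) (use n in \<open>auto simp: T_def corr_zero\<close>)
  qed
  have g: "\<And>n. Gm a n \<noteq> 0" using Gm_nz[OF anz] by blast
  have dp: "pochhammer d p \<noteq> 0" for p using dnz by (auto simp: pochhammer_eq_0_iff)
  have eq: "bmult (gaussF a b d) (hyp0F1_y (1 - a)) p q = badd (H3_neg a b d) S p q" for p q
  proof -
    define K where "K = (-1) ^ q * pochhammer b p / (pochhammer d p * fact p * Gm a 0 ^ 2)"
    define X where "X = (\<Sum>k\<in>{1..q}. Gm a (- int k) * pochhammer (of_nat p) k / (fact k * fact (q - k)))"
    have c: "Gm a (int p) * Gm a (- int q) / fact q = Gm a (int p - int q) * (Gm a 0 / fact q + X)"
      unfolding X_def by (rule core[OF anz])
    have sq: "(-1::complex) ^ q * (-1) ^ q = 1" by (simp flip: power_add)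
    have pa: "pochhammer a p = Gm a (int p) / Gm a 0"
      using poch_nat_Gm[OF anz, of 0 p] by simp
    have pi: "poch_int a (int p - int q) = Gm a (int p - int q) / Gm a 0"
      using poch_int_Gm[OF anz, of 0 "int p - int q"] by simp
    have L: "bmult (gaussF a b d) (hyp0F1_y (1 - a)) p q = K * (Gm a (int p) * Gm a (- int q) / fact q)"
      unfolding lhs_coef unfolding K_def gaussF_def hyp0F1_y_def poch1ma[OF anz] pa
      using g dp sq by (simp add: field_simps power2_eq_square)
    have Sx: "S p q = (\<Sum>k\<in>{1..q}. corr_term a b d k p q)"
    proof -
      have "{..<Suc q} = insert 0 {1..q}" by auto
      then show ?thesis unfolding S_def T_def by (simp add: sum.insert)
    qed
    also have "\<dots> = (\<Sum>k\<in>{1..q}. K * Gm a (int p - int q) * (Gm a (- int k) * pochhammer (of_nat p) k / (fact k * fact (q - k))))"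
      by (rule sum.cong[OF refl]) (auto simp: corr_eq[OF anz dnz] K_def field_simps)
    also have "\<dots> = K * Gm a (int p - int q) * X"
      unfolding X_def by (simp add: sum_distrib_left)
    finally have S2: "S p q = K * Gm a (int p - int q) * X" .
    have H: "H3_neg a b d p q = K * Gm a (int p - int q) * (Gm a 0 / fact q)"
      unfolding H3_neg_def K_def pi using g dp by (simp add: field_simps power2_eq_square)
    show ?thesis unfolding L badd_def S2 H c by (simp add: algebra_simps)
  qed
  show ?thesis
    by (rule exI[of _ S]) (use fs eq in \<open>auto simp: T_def\<close>)
qed

end
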